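(* Let $\delta,k'$ be non-negative integers with $\delta>k'+1$, and let $r,t$ be non-negative integers such that $\binom{\delta}{2}-k'=\binom{r}{2}+t$ with $0\le t<r$. Then \[\binom{\delta}{3}-\binom{r}{3}-\binom{t}{2}=\sum_{i=2}^{k'+1}(\delta-i).\]
   Context: Binomial coefficients satisfy $\binom{a}{b}=0$ when $0\le a<b$. *)

theory Defs
  imports Main
begin

end

theory Submission
  imports Defs
begin

lemma c2_suc: "Suc n choose 2 = (n choose 2) + n"
  by (simp add: numeral_2_eq_2)

lemma c3_suc: "Suc n choose 3 = (n choose 3) + (n choose 2)"
  by (simp add: numeral_3_eq_3 numeral_2_eq_2)

lemma c2_mono: "m \<le> n \<Longrightarrow> m choose 2 \<le> n choose (2::nat)"
  by (simp add: binomial_right_mono)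

lemma diff_sum:
  "k \<le> n \<Longrightarrow> int (n choose 2) - int ((n - k) choose 2) = (\<Sum>i = 2..k + 1. int n + 1 - int i)"
proof (induction k)
  case 0
  then show ?case by simp
next
  case (Suc k)
  have e: "n - k = Suc (n - Suc k)" using Suc.prems by simp
  have "int ((n - k) choose 2) = int ((n - Suc k) choose 2) + int (n - Suc k)"
    unfolding e c2_suc by simp
  moreover have "(\<Sum>i = 2..Suc k + 1. int n + 1 - int i) = (\<Sum>i = 2..k + 1. int n + 1 - int i) + (int n + 1 - int (k+2))"
    by simp
  ultimately show ?case using Suc by simp
qed

theorem lemma3p7:
  fixes \<delta> k' r t :: nat
  assumes "\<delta> > k' + 1"
    and "int (\<delta> choose 2) - int k' = int (r choose 2) + int t"
    and "t < r"
  shows "int (\<delta> choose 3) - int (r choose 3) - int (t choose 2)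
           = (\<Sum>i = 2..k' + 1. int \<delta> - int i)"
proof -
  obtain d where d: "\<delta> = Suc d" using assms(1) by (cases \<delta>) auto
  have hd: "int (\<delta> choose 2) = int (d choose 2) + int d" unfolding d c2_suc by simp
  have r1: "r \<le> \<delta>"
  proof (rule ccontr)
    assume "\<not> r \<le> \<delta>"
    then have "Suc \<delta> choose 2 \<le> r choose 2" by (intro c2_mono) simp
    then show False using assms(2) c2_suc[of \<delta>] assms(1) by simp
  qed
  have r2: "r \<ge> d"
  proof (rule ccontr)
    assume "\<not> r \<ge> d"
    then have "Suc r choose 2 \<le> d choose 2" by (intro c2_mono) simp
    then show False using assms c2_suc[of r] hd d by simp
  qed
  show ?thesis
  proof (cases "r = \<delta>")
    case True
    then have "k' = 0" "t = 0" using assms(2) by auto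
    then show ?thesis using True by simp
  next
    case False
    then have rd: "r = d" using r1 r2 d by simp
    have tv: "t = d - k'" using assms(2) hd rd assms(1) d by simp
    have "int (\<delta> choose 3) - int (r choose 3) = int (d choose 2)"
      unfolding d rd c3_suc by simp
    moreover have "int (d choose 2) - int ((d - k') choose 2) = (\<Sum>i = 2..k' + 1. int d + 1 - int i)"
      using assms(1) d by (intro diff_sum) simp
    moreover have "(\<Sum>i = 2..k' + 1. int d + 1 - int i) = (\<Sum>i = 2..k' + 1. int \<delta> - int i)"
      using d by (intro sum.cong) auto
    ultimately show ?thesis using tv by (simp only:)
  qed
qed

end
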